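(* Let $K=\mathbb{Q}(\rho)$ be a simplest cubic field, where $\rho$ is a root of $x^3-ax^2-(a+3)x-1$ with $a\in\mathbb{Z}_{\geq-1}$, and let $\Delta=a^2+3a+9$. (1) If $p>3$ is a prime with $p^2\mid\Delta$, then there are integers $1\leq k,l\leq p-1$ with $\frac{k+l\rho+\rho^2}{p}\in\mathcal{O}_K$ and $2k-l\equiv -2\pmod p$. (2) In particular, if $p>3$ is prime and $K$ has integral basis $\{1,\rho,\frac{k+l\rho+\rho^2}{p}\}$ with $1\leq k,l\leq p-1$, then $2k-l\equiv-2\pmod p$. *)

theory Defs
  imports "HOL-Computational_Algebra.Polynomial" "HOL-Number_Theory.Cong" Complex_Main
begin

definition simplest_cubic_poly :: "int \<Rightarrow> complex poly" where
  "simplest_cubic_poly a = [:-1, - of_int (a + 3), - of_int a, 1:]"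

definition cubic_field :: "complex \<Rightarrow> complex set" where
  "cubic_field \<rho> = {of_rat q0 + of_rat q1 * \<rho> + of_rat q2 * \<rho>^2 | q0 q1 q2. True}"

definition ring_of_integers :: "complex \<Rightarrow> complex set" where
  "ring_of_integers \<rho> = {x \<in> cubic_field \<rho>. algebraic_int x}"

definition is_integral_basis :: "complex \<Rightarrow> complex \<Rightarrow> complex \<Rightarrow> complex \<Rightarrow> bool" where
  "is_integral_basis \<rho> b0 b1 b2 \<longleftrightarrow>
     ring_of_integers \<rho> = {of_int m0 * b0 + of_int m1 * b1 + of_int m2 * b2 | m0 m1 m2. True}"

end

theory Submission
  imports Defs "Jordan_Normal_Form.Char_Poly"
begin

lemma alg_int_sq:
  fixes x :: complex
  assumes "algebraic_int x"
  shows "algebraic_int (x^2)"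
proof -
  obtain P :: "int poly" where P0: "poly (map_poly of_int P) x = 0" and P1: "lead_coeff P = 1"
    using assms by (auto simp: algebraic_int_altdef_ipoly)
  define dg where "dg = degree P"
  have dpos: "dg > 0"
  proof (rule ccontr)
    assume "\<not> dg > 0"
    then have "dg = 0" by simp
    then have "poly (map_poly of_int P) x = (of_int (coeff P 0) :: complex)"
      by (simp add: poly_altdef dg_def degree_map_poly coeff_map_poly)
    then show False using P0 P1 \<open>dg = 0\<close> unfolding dg_def by simp
  qed
  define B :: "int mat" where "B = mat dg dg (\<lambda>(i,j). if i + 1 < dg then (if j = i+1 then 1 else 0) else - coeff P j)"
  define v :: "complex vec" where "v = vec dg (\<lambda>i. x^i)"
  have Bc: "B \<in> carrier_mat dg dg" unfolding B_def by simp
  have vc: "v \<in> carrier_vec dg" unfolding v_def by simp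
  have sumP: "(\<Sum>j<dg. of_int (coeff P j) * x^j) = - (x^dg)"
  proof -
    have "0 = poly (map_poly of_int P) x" using P0 by simp
    also have "\<dots> = (\<Sum>j\<le>dg. of_int (coeff P j) * x^j)"
      by (simp add: poly_altdef dg_def coeff_map_poly degree_map_poly)
    also have "\<dots> = (\<Sum>j<dg. of_int (coeff P j) * x^j) + x^dg"
      using P1 by (simp add: lessThan_Suc_atMost[symmetric] dg_def)
    finally show ?thesis by (simp add: eq_neg_iff_add_eq_0 add.commute)
  qed
  have Bv: "map_mat of_int B *\<^sub>v v = x \<cdot>\<^sub>v v"
  proof (rule eq_vecI)
    fix i assume i: "i < dim_vec (x \<cdot>\<^sub>v v)"
    then have idg: "i < dg" using vc by simp
    have "(map_mat of_int B *\<^sub>v v) $ i = row (map_mat of_int B) i \<bullet> v" using idg Bc by simp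
    also have "\<dots> = (\<Sum>j\<in>{0..<dg}. row (map_mat of_int B) i $ j * v $ j)"
      using vc by (simp add: scalar_prod_def)
    also have "\<dots> = (\<Sum>j<dg. of_int (B $$ (i,j)) * x^j)"
      unfolding atLeast0LessThan using idg Bc by (intro sum.cong) (auto simp: v_def)
    also have "\<dots> = x * x^i"
    proof (cases "i + 1 < dg")
      case True
      then have "(\<Sum>j<dg. of_int (B $$ (i,j)) * x^j) = (\<Sum>j<dg. if j = i+1 then x^j else 0)"
        using idg by (intro sum.cong) (auto simp: B_def)
      also have "\<dots> = x^(i+1)" using True by (simp add: sum.delta)
      finally show ?thesis by simp
    next
      case False
      then have ii: "i = dg - 1" using idg by simp
      have "(\<Sum>j<dg. of_int (B $$ (i,j)) * x^j) = (\<Sum>j<dg. - (of_int (coeff P j) * x^j))"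
        using idg False by (intro sum.cong) (auto simp: B_def)
      also have "\<dots> = x^dg" using sumP by (simp add: sum_negf)
      also have "\<dots> = x * x^i" using dpos ii by (simp flip: power_Suc)
      finally show ?thesis .
    qed
    finally show "(map_mat of_int B *\<^sub>v v) $ i = (x \<cdot>\<^sub>v v) $ i" using idg unfolding v_def by simp
  qed (use vc Bc in simp)
  have BBv: "map_mat of_int (B * B) *\<^sub>v v = x^2 \<cdot>\<^sub>v v"
  proof -
    have "map_mat of_int (B * B) = (map_mat of_int B :: complex mat) * map_mat of_int B"
      using of_int_hom.mat_hom_mult[OF Bc Bc] by simp
    then have "map_mat of_int (B * B) *\<^sub>v v = map_mat of_int B *\<^sub>v (map_mat of_int B *\<^sub>v v)"
      using Bc vc by (simp add: assoc_mult_mat_vec[of _ dg dg _ dg])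
    also have "\<dots> = x \<cdot>\<^sub>v (x \<cdot>\<^sub>v v)" using Bv Bc vc by (simp add: mult_mat_vec)
    also have "\<dots> = x^2 \<cdot>\<^sub>v v" by (simp add: smult_smult_assoc power2_eq_square)
    finally show ?thesis .
  qed
  have BBc: "B * B \<in> carrier_mat dg dg" using Bc by simp
  have ev: "eigenvalue (map_mat of_int (B * B) :: complex mat) (x^2)"
    unfolding eigenvalue_def eigenvector_def
  proof (intro exI conjI)
    show "v \<in> carrier_vec (dim_row (map_mat of_int (B * B) :: complex mat))" using vc BBc Bc by simp
    show "v \<noteq> 0\<^sub>v (dim_row (map_mat of_int (B * B) :: complex mat))"
    proof
      assume "v = 0\<^sub>v (dim_row (map_mat of_int (B * B) :: complex mat))"
      then have "v $ 0 = 0" using dpos BBc Bc by simp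
      then show False using dpos unfolding v_def by simp
    qed
    show "map_mat of_int (B * B) *\<^sub>v v = x\<^sup>2 \<cdot>\<^sub>v v" by (rule BBv)
  qed
  have mc: "(map_mat of_int (B * B) :: complex mat) \<in> carrier_mat dg dg" using BBc by simp
  have "poly (char_poly (map_mat of_int (B * B) :: complex mat)) (x^2) = 0"
    using ev eigenvalue_root_char_poly[OF mc] by simp
  moreover have "char_poly (map_mat of_int (B * B) :: complex mat) = map_poly of_int (char_poly (B * B))"
    using of_int_hom.char_poly_hom[OF BBc] by simp
  moreover have "lead_coeff (char_poly (B * B)) = 1"
    using degree_monic_char_poly[OF BBc] by simp
  ultimately show ?thesis unfolding algebraic_int_altdef_ipoly by auto
qed


lemma froot:
  assumes "poly (simplest_cubic_poly a) \<rho> = 0"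
  shows "\<rho>^3 = of_int a * \<rho>^2 + of_int (a+3) * \<rho> + 1"
proof -
  have "poly (simplest_cubic_poly a) \<rho> = \<rho>^3 - of_int a * \<rho>^2 - of_int (a+3) * \<rho> - 1"
    by (simp add: simplest_cubic_poly_def algebra_simps power2_eq_square power3_eq_cube)
  with assms show ?thesis by (simp add: algebra_simps)
qed

lemma no_rat_root:
  fixes q :: rat
  shows "q^3 - of_int a * q^2 - of_int (a+3) * q - 1 \<noteq> 0"
proof
  assume h: "q^3 - of_int a * q^2 - of_int (a+3) * q - 1 = 0"
  have "algebraic_int q"
  proof (rule algebraic_int.intros[of "[:-1, - of_int (a+3), - of_int a, 1:]"])
    show "lead_coeff [:-1, - of_int (a+3), - of_int a, 1:] = (1::rat)" by simp
    show "\<forall>i. coeff [:-1, - of_int (a+3), - of_int a, 1:] i \<in> (\<int>::rat set)"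
      by (auto simp: coeff_pCons split: nat.split)
    show "poly [:-1, - of_int (a+3), - of_int a, 1:] q = 0"
      using h by (simp add: algebra_simps power2_eq_square power3_eq_cube)
  qed
  moreover have "q \<in> \<rat>" by (metis Rats_of_rat id_apply of_rat_eq_id)
  ultimately have "q \<in> \<int>" by (rule rational_algebraic_int_is_int)
  then obtain n where qn: "q = of_int n" by (auto elim: Ints_cases)
  have "of_int (n^3 - a * n^2 - (a+3) * n - 1) = (0::rat)" using h qn by simp
  then have hn: "n^3 - a * n^2 - (a+3) * n - 1 = 0" by (simp only: of_int_eq_0_iff)
  then have "n * (n^2 - a*n - (a+3)) = 1" by (simp add: algebra_simps power2_eq_square power3_eq_cube)
  then have "n dvd 1" by (metis dvd_triv_left)
  then have "n = 1 \<or> n = -1" by (simp add: zdvd1_eq abs_if split: if_splits; arith)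
  then show False
  proof
    assume "n = 1" then have "-2*a - 3 = 0" using hn by simp
    then show False by presburger
  next
    assume "n = -1" then show False using hn by simp
  qed
qed

lemma not_rat:
  assumes "poly (simplest_cubic_poly a) \<rho> = 0"
  shows "\<rho> \<noteq> of_rat q"
proof
  assume h: "\<rho> = of_rat q"
  have "(of_rat (q^3 - of_int a * q^2 - of_int (a+3) * q - 1) :: complex) = \<rho>^3 - of_int a * \<rho>^2 - of_int (a+3) * \<rho> - 1"
    using h by (simp add: of_rat_diff of_rat_mult of_rat_power of_rat_add)
  also have "\<dots> = 0" using froot[OF assms] by simp
  finally show False using no_rat_root[of q a] by simp
qed

lemma lin1:
  assumes "poly (simplest_cubic_poly a) \<rho> = 0"
    and h: "of_rat A * \<rho> + of_rat B = 0"
  shows "A = 0 \<and> B = 0"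
proof (cases "A = 0")
  case True then show ?thesis using h by simp
next
  case False
  have "\<rho> = of_rat (- B / A)"
    using h False by (simp add: of_rat_divide of_rat_minus field_simps eq_neg_iff_add_eq_0)
  then show ?thesis using not_rat[OF assms(1)] by blast
qed

lemma linind:
  assumes root: "poly (simplest_cubic_poly a) \<rho> = 0"
    and h: "of_int i0 + of_int i1 * \<rho> + of_int i2 * \<rho>^2 = 0"
  shows "i0 = 0 \<and> i1 = 0 \<and> i2 = 0"
proof (cases "i2 = 0")
  case True
  then have hh: "of_rat (of_int i1) * \<rho> + of_rat (of_int i0) = 0" using h by (simp add: add.commute)
  from lin1[OF root hh] show ?thesis using True by simp
next
  case False
  define u :: rat where "u = - of_int i1 / of_int i2"
  define v :: rat where "v = - of_int i0 / of_int i2"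
  have hsq: "\<rho>^2 = of_rat u * \<rho> + of_rat v"
  proof -
    have "of_int i2 * \<rho>^2 = (of_int i0 + of_int i1 * \<rho> + of_int i2 * \<rho>^2) - of_int i1 * \<rho> - of_int i0" by simp
    also have "\<dots> = - of_int i1 * \<rho> - of_int i0" using h by simp
    finally have eq: "of_int i2 * \<rho>^2 = - of_int i1 * \<rho> - of_int i0" .
    have i2c: "(of_int i2 :: complex) \<noteq> 0" using False by simp
    have ur: "(of_rat u :: complex) = - of_int i1 / of_int i2" unfolding u_def by (simp add: of_rat_divide of_rat_minus)
    have vr: "(of_rat v :: complex) = - of_int i0 / of_int i2" unfolding v_def by (simp add: of_rat_divide of_rat_minus)
    have "\<rho>^2 = (of_int i2 * \<rho>^2) / of_int i2" using i2c by simp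
    also have "\<dots> = (- of_int i1 * \<rho> - of_int i0) / of_int i2" using eq by simp
    also have "\<dots> = of_rat u * \<rho> + of_rat v" unfolding ur vr using i2c by (simp add: field_simps)
    finally show ?thesis .
  qed
  have r3: "\<rho>^3 = of_int a * \<rho>^2 + of_int (a+3) * \<rho> + 1" by (rule froot[OF root])
  have "(of_rat (u*u + v - of_int a * u - of_int (a+3)) :: complex) * \<rho> + of_rat (u*v - of_int a * v - 1)
      = (of_rat u * of_rat u + of_rat v - of_int a * of_rat u - of_int (a+3)) * \<rho> + (of_rat u * of_rat v - of_int a * of_rat v - 1)"
    by (simp add: of_rat_add of_rat_mult of_rat_diff)
  also have "\<dots> = 0" using hsq r3 by Groebner_Basis.algebra
  finally have "u*u + v - of_int a * u - of_int (a+3) = 0 \<and> u*v - of_int a * v - 1 = 0"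
    using lin1[OF root] by blast
  then have e1: "u*u + v - of_int a * u - of_int (a+3) = 0" and e2: "u*v - of_int a * v - 1 = 0" by auto
  define t where "t = u - of_int a"
  have "(-t)^3 - of_int a * (-t)^2 - of_int (a+3) * (-t) - 1 = - (t * (u*u + v - of_int a * u - of_int (a+3))) + (u*v - of_int a * v - 1) * 0"
    using e2 unfolding t_def by Groebner_Basis.algebra
  also have "\<dots> = 0" using e1 by simp
  finally show ?thesis using no_rat_root[of "-t" a] by blast
qed

lemma cubic_alg_int:
  fixes x :: complex
  assumes "x^3 + of_int c2 * x^2 + of_int c1 * x + of_int c0 = 0"
  shows "algebraic_int x"
proof (rule algebraic_int.intros[of "[:of_int c0, of_int c1, of_int c2, 1:]"])
  show "lead_coeff [:of_int c0, of_int c1, of_int c2, 1:] = (1::complex)" by simp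
  show "\<forall>i. coeff [:of_int c0, of_int c1, of_int c2, 1:] i \<in> (\<int>::complex set)"
    by (auto simp: coeff_pCons split: nat.split)
  show "poly [:of_int c0, of_int c1, of_int c2, 1:] x = 0"
    using assms by (simp add: algebra_simps power2_eq_square power3_eq_cube)
qed


lemma part1:
  fixes a :: int and \<rho> :: complex and p :: nat
  assumes root: "poly (simplest_cubic_poly a) \<rho> = 0"
    and pp: "prime p" and p3: "p > 3" and dv: "int (p^2) dvd (a^2 + 3*a + 9)"
  shows "\<exists>k l :: int. 1 \<le> k \<and> k \<le> int p - 1 \<and> 1 \<le> l \<and> l \<le> int p - 1 \<and>
               (of_int k + of_int l * \<rho> + \<rho>^2) / of_nat p \<in> ring_of_integers \<rho> \<and>
               [2*k - l = -2] (mod int p)"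
proof -
  define P where "P = int p"
  have Pp: "prime P" using pp unfolding P_def by simp
  have P3: "P > 3" using p3 unfolding P_def by simp
  have cop3: "coprime P 3"
  proof (rule prime_imp_coprime[OF Pp])
    show "\<not> P dvd 3" using P3 by (auto dest: zdvd_imp_le)
  qed
  have copP2_3: "coprime (P^2) 3" using cop3 by simp
  have copP2_9: "coprime (P^2) 9"
  proof -
    have "coprime (P^2) (3^2)" using copP2_3 by (simp only: coprime_power_right_iff) simp
    then show ?thesis by (simp add: power2_eq_square)
  qed
  have "gcd 3 (P^2) dvd a" using copP2_3 by (simp add: coprime_iff_gcd_eq_1 gcd.commute)
  then obtain c where "[3 * c = a] (mod P^2)" using cong_solve_dvd_int by blast
  then have "P^2 dvd 3*c - a" by (simp add: cong_iff_dvd_diff)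
  then obtain t' where t': "3*c - a = P^2 * t'" by (elim dvdE)
  define t where "t = - t'"
  have ha: "a = 3*c + P^2*t" using t' unfolding t_def by simp
  obtain D where D: "a^2 + 3*a + 9 = P^2 * D" using dv unfolding P_def by (auto elim: dvdE)
  have "9 * (c^2 + c + 1) = P^2 * (D - 2*a*t + P^2*t^2 - 3*t)"
    using ha D by Groebner_Basis.algebra
  then have "P^2 dvd 9 * (c^2 + c + 1)" by simp
  then have "P^2 dvd c^2 + c + 1" using copP2_9 coprime_dvd_mult_right_iff by blast
  then obtain e where he: "c^2 + c + 1 = P^2 * e" by (elim dvdE)
  have Pnc: "\<not> P dvd c"
  proof
    assume "P dvd c"
    then have "P dvd c^2 + c" by (simp add: power2_eq_square)
    moreover have "P dvd c^2 + c + 1" using he by (simp add: power2_eq_square)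
    ultimately have "P dvd 1" by (metis add_diff_cancel_left' dvd_diff)
    then show False using Pp by (simp add: prime_int_iff)
  qed
  define k where "k = c^2 mod P"
  define m where "m = - (c^2 div P)"
  define l where "l = (-2*c) mod P"
  define n where "n = - ((-2*c) div P)"
  have hk: "k = c^2 + P*m" unfolding k_def m_def by (metis add_diff_cancel_left' minus_mult_div_eq_mod mult_minus_right diff_conv_add_uminus)
  have hl: "l = -2*c + P*n" unfolding l_def n_def by (metis add_diff_cancel_left' minus_mult_div_eq_mod mult_minus_right diff_conv_add_uminus)
  have Ppos: "P > 0" using P3 by simp
  have k0: "0 \<le> k" "k < P" unfolding k_def using Ppos by auto
  have l0: "0 \<le> l" "l < P" unfolding l_def using Ppos by auto
  have kn0: "k \<noteq> 0"
  proof
    assume "k = 0"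
    then have "P dvd c^2" unfolding k_def by (simp add: dvd_eq_mod_eq_0)
    then have "P dvd c" using Pp prime_dvd_power by blast
    then show False using Pnc by simp
  qed
  have ln0: "l \<noteq> 0"
  proof
    assume "l = 0"
    then have "P dvd -2*c" unfolding l_def by (simp add: dvd_eq_mod_eq_0)
    then have "P dvd 2*c" by simp
    then have "P dvd 2 \<or> P dvd c" using Pp prime_dvd_mult_iff by blast
    then show False using Pnc P3 by (auto dest: zdvd_imp_le)
  qed
  have cong: "[2*k - l = -2] (mod P)"
  proof -
    have "2*k - l - (-2) = P * (2*P*e + 2*m - n)" using hk hl he by Groebner_Basis.algebra
    then show ?thesis by (simp add: cong_iff_dvd_diff)
  qed
  define s where "s = l + a"
  define M0 where "M0 = c*P*t - c*P*e - c*m + c*n - P^3*t*e - P^2*t*m - P^2*e*n + P*t + P*e - P*m*n + n"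
  define M1 where "M1 = 2*c*P*t + c*n - P^2*t*n + P*t + 3*P*e - P*n^2 + m"
  define N2 where "N2 = 2*c*P*t + 2*c*n + P^3*t^2 + 2*P^2*t*n + P*t + 3*P*e + P*n^2 + 2*m"
  define N1 where "N1 = 2*c*P^2*t^2 + 2*c*P*t*n + 2*c*e - P^3*t^2*n + P^2*t^2 + 4*P^2*t*e - 2*P^2*t*n^2 + P*t*n + 3*P*e*n - P*n^3 - t + e"
  define N0 where "N0 = c*P^2*t^2 - 2*c*P^2*t*e - 2*c*P*t*m + 2*c*P*t*n - 2*c*P*e*n + c*t + c*e - 2*c*m*n + c*n^2 - P^4*t^2*e - P^3*t^2*m - 2*P^3*t*e*n + P^2*t^2 + P^2*t*e - 2*P^2*t*m*n - 2*P^2*e^2 - P^2*e*n^2 - P*t*m + 2*P*t*n - 3*P*e*m + 2*P*e*n - P*m*n^2 + 2*e - m^2 + n^2"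
  define ga where "ga = a^2 + 2*a*l + a + 2*k + l^2 + 3"
  define be where "be = a^2 + 2*a*l + 3*a + 2*k*l + 6*l + 1"
  define al where "al = a + k^2 + 2*l"
  have hM0: "P * M0 = 1 - s*k" unfolding M0_def s_def using ha hk hl he by Groebner_Basis.algebra
  have hM1: "P * M1 = k + a + 3 - s*l" unfolding M1_def s_def using ha hk hl he by Groebner_Basis.algebra
  have hN2: "P * N2 = ga" unfolding N2_def ga_def using ha hk hl he by Groebner_Basis.algebra
  have hN1: "P^2 * N1 = be - ga*l" unfolding N1_def be_def ga_def using ha hk hl he by Groebner_Basis.algebra
  have hN0: "P^2 * N0 = al - ga*k" unfolding N0_def al_def ga_def using ha hk hl he by Groebner_Basis.algebra
  define \<theta> where "\<theta> = (of_int k + of_int l * \<rho> + \<rho>^2) / (of_nat p :: complex)"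
  define Pc where "Pc = (of_int P :: complex)"
  have Pc0: "Pc \<noteq> 0" unfolding Pc_def using Ppos by simp
  have hth: "Pc * \<theta> = of_int k + of_int l * \<rho> + \<rho>^2" unfolding \<theta>_def Pc_def P_def using Pc0 unfolding Pc_def P_def by simp
  have r3: "\<rho>^3 = of_int a * \<rho>^2 + of_int (a+3) * \<rho> + 1" by (rule froot[OF root])
  have cM0: "Pc * of_int M0 = 1 - (of_int l + of_int a) * of_int k"
    using arg_cong[OF hM0, of "of_int :: int \<Rightarrow> complex"] unfolding Pc_def s_def by simp
  have cM1: "Pc * of_int M1 = of_int k + of_int a + 3 - (of_int l + of_int a) * of_int l"
    using arg_cong[OF hM1, of "of_int :: int \<Rightarrow> complex"] unfolding Pc_def s_def by simp
  have cN2: "Pc * of_int N2 = of_int a^2 + 2*of_int a*of_int l + of_int a + 2*of_int k + of_int l^2 + 3"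
    using arg_cong[OF hN2, of "of_int :: int \<Rightarrow> complex"] unfolding Pc_def ga_def by simp
  have cN1: "Pc^2 * of_int N1 = (of_int a^2 + 2*of_int a*of_int l + 3*of_int a + 2*of_int k*of_int l + 6*of_int l + 1)
       - (of_int a^2 + 2*of_int a*of_int l + of_int a + 2*of_int k + of_int l^2 + 3) * of_int l"
    using arg_cong[OF hN1, of "of_int :: int \<Rightarrow> complex"] unfolding Pc_def ga_def be_def by simp
  have cN0: "Pc^2 * of_int N0 = (of_int a + of_int k^2 + 2*of_int l)
       - (of_int a^2 + 2*of_int a*of_int l + of_int a + 2*of_int k + of_int l^2 + 3) * of_int k"
    using arg_cong[OF hN0, of "of_int :: int \<Rightarrow> complex"] unfolding Pc_def ga_def al_def by simp
  have r3': "\<rho>^3 = of_int a * \<rho>^2 + (of_int a + 3) * \<rho> + 1" using r3 by simp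
  have R2: "\<theta> * \<rho> = of_int M0 + of_int M1 * \<rho> + (of_int l + of_int a) * \<theta>"
  proof -
    have "Pc * (\<theta> * \<rho>) = Pc * (of_int M0 + of_int M1 * \<rho> + (of_int l + of_int a) * \<theta>)"
      using hth r3' cM0 cM1 by Groebner_Basis.algebra
    then show ?thesis using Pc0 by simp
  qed
  have R3: "\<theta>^2 = of_int N0 + of_int N1 * \<rho> + of_int N2 * \<theta>"
  proof -
    have "Pc^2 * \<theta>^2 = Pc^2 * (of_int N0 + of_int N1 * \<rho> + of_int N2 * \<theta>)"
      using hth r3' cN0 cN1 cN2 by Groebner_Basis.algebra
    then show ?thesis using Pc0 by simp
  qed
  have "\<theta>^3 + of_int (- (M1 + N2)) * \<theta>^2 + of_int (N2*M1 - N0 - N1*s) * \<theta> + of_int (N0*M1 - N1*M0) = 0"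
  proof -
    have "\<theta>^3 + of_int (- (M1 + N2)) * \<theta>^2 + of_int (N2*M1 - N0 - N1*s) * \<theta> + of_int (N0*M1 - N1*M0)
        = \<theta>^3 - (of_int M1 + of_int N2) * \<theta>^2 + (of_int N2*of_int M1 - of_int N0 - of_int N1*(of_int l + of_int a)) * \<theta> + (of_int N0*of_int M1 - of_int N1*of_int M0)"
      unfolding s_def by (simp add: algebra_simps)
    also have "\<dots> = 0" using R2 R3 by Groebner_Basis.algebra
    finally show ?thesis .
  qed
  then have ai: "algebraic_int \<theta>" by (rule cubic_alg_int)
  have cf: "\<theta> \<in> cubic_field \<rho>"
    unfolding cubic_field_def
  proof (intro CollectI exI conjI)
    show "\<theta> = of_rat (of_int k / of_int P) + of_rat (of_int l / of_int P) * \<rho> + of_rat (1 / of_int P) * \<rho>^2"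
      unfolding \<theta>_def P_def using Ppos unfolding P_def by (simp add: of_rat_divide field_simps)
  qed simp
  show ?thesis
  proof (intro exI conjI)
    show "1 \<le> k" using k0 kn0 by simp
    show "k \<le> int p - 1" using k0 unfolding P_def by simp
    show "1 \<le> l" using l0 ln0 by simp
    show "l \<le> int p - 1" using l0 unfolding P_def by simp
    show "(of_int k + of_int l * \<rho> + \<rho>^2) / of_nat p \<in> ring_of_integers \<rho>"
      using ai cf unfolding ring_of_integers_def \<theta>_def by simp
    show "[2*k - l = -2] (mod int p)" using cong unfolding P_def .
  qed
qed


lemma part2:
  fixes a :: int and \<rho> :: complex and p :: nat and k l :: int
  assumes root: "poly (simplest_cubic_poly a) \<rho> = 0"
    and pp: "prime p" and p3: "p > 3"
    and ib: "is_integral_basis \<rho> 1 \<rho> ((of_int k + of_int l * \<rho> + \<rho>^2) / of_nat p)"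
  shows "[2*k - l = -2] (mod int p)"
proof -
  define P where "P = int p"
  have Pp: "prime P" using pp unfolding P_def by simp
  have Ppos: "P > 0" using p3 unfolding P_def by simp
  define \<theta> where "\<theta> = (of_int k + of_int l * \<rho> + \<rho>^2) / (of_nat p :: complex)"
  define Pc where "Pc = (of_int P :: complex)"
  have Pc0: "Pc \<noteq> 0" unfolding Pc_def using Ppos by simp
  have hth: "Pc * \<theta> = of_int k + of_int l * \<rho> + \<rho>^2" unfolding \<theta>_def Pc_def P_def using Pc0 unfolding Pc_def P_def by simp
  have r3': "\<rho>^3 = of_int a * \<rho>^2 + (of_int a + 3) * \<rho> + 1" using froot[OF root] by simp
  have span: "ring_of_integers \<rho> = {of_int m0 * 1 + of_int m1 * \<rho> + of_int m2 * \<theta> | m0 m1 m2. True}"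
    using ib unfolding is_integral_basis_def \<theta>_def .
  have "\<theta> \<in> {of_int m0 * 1 + of_int m1 * \<rho> + of_int m2 * \<theta> | m0 m1 m2. True}"
  proof (intro CollectI exI conjI)
    show "\<theta> = of_int 0 * 1 + of_int 0 * \<rho> + of_int 1 * \<theta>" by simp
  qed simp
  then have "\<theta> \<in> ring_of_integers \<rho>" using span by simp
  then have "algebraic_int \<theta>" unfolding ring_of_integers_def by simp
  then have ai2: "algebraic_int (\<theta>^2)" by (rule alg_int_sq)
  define ga where "ga = a^2 + 2*a*l + a + 2*k + l^2 + 3"
  define be where "be = a^2 + 2*a*l + 3*a + 2*k*l + 6*l + 1"
  define al where "al = a + k^2 + 2*l"
  have cga: "(of_int ga :: complex) = of_int a^2 + 2*of_int a*of_int l + of_int a + 2*of_int k + of_int l^2 + 3"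
    unfolding ga_def by simp
  have cbe: "(of_int be :: complex) = of_int a^2 + 2*of_int a*of_int l + 3*of_int a + 2*of_int k*of_int l + 6*of_int l + 1"
    unfolding be_def by simp
  have cal: "(of_int al :: complex) = of_int a + of_int k^2 + 2*of_int l"
    unfolding al_def by simp
  have hsq: "Pc^2 * \<theta>^2 = of_int al + of_int be * \<rho> + of_int ga * \<rho>^2"
    unfolding cga cbe cal using hth r3' by Groebner_Basis.algebra
  have cf2: "\<theta>^2 \<in> cubic_field \<rho>"
    unfolding cubic_field_def
  proof (intro CollectI exI conjI)
    have "\<theta>^2 = (of_int al + of_int be * \<rho> + of_int ga * \<rho>^2) / Pc^2"
      using hsq Pc0 by (simp add: field_simps)
    also have "\<dots> = of_rat (of_int al / of_int (P^2)) + of_rat (of_int be / of_int (P^2)) * \<rho> + of_rat (of_int ga / of_int (P^2)) * \<rho>^2"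
      unfolding Pc_def using Ppos by (simp add: of_rat_divide of_rat_power field_simps)
    finally show "\<theta>^2 = of_rat (of_int al / of_int (P^2)) + of_rat (of_int be / of_int (P^2)) * \<rho> + of_rat (of_int ga / of_int (P^2)) * \<rho>^2" .
  qed simp
  have "\<theta>^2 \<in> ring_of_integers \<rho>" using ai2 cf2 unfolding ring_of_integers_def by simp
  then obtain n0 n1 n2 where hn: "\<theta>^2 = of_int n0 * 1 + of_int n1 * \<rho> + of_int n2 * \<theta>"
    using span by auto
  have "of_int (al - P^2*n0 - P*n2*k) + of_int (be - P^2*n1 - P*n2*l) * \<rho> + of_int (ga - P*n2) * \<rho>^2
      = (of_int al - Pc^2*of_int n0 - Pc*of_int n2*of_int k) + (of_int be - Pc^2*of_int n1 - Pc*of_int n2*of_int l) * \<rho> + (of_int ga - Pc*of_int n2) * \<rho>^2"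
    unfolding Pc_def by simp
  also have "\<dots> = 0" using hsq hn hth by Groebner_Basis.algebra
  finally have "al - P^2*n0 - P*n2*k = 0 \<and> be - P^2*n1 - P*n2*l = 0 \<and> ga - P*n2 = 0"
    by (rule linind[OF root])
  then have dal: "P dvd al" and dbe: "P dvd be" and dga: "P dvd ga"
    by (auto simp: algebra_simps power2_eq_square intro!: dvdI)
  define g where "g = 2*k + 2 - l"
  define K where "K = k + 1"
  have "g^4 = (2*K^2 + 2*K*g + 2*K + g^2) * (ga - be) - 2*(be + ga) + (4*a + 16*k^2 - 12*k*l + 44*k + 2*l^2 - 12*l + 32) * al"
    unfolding g_def K_def ga_def be_def al_def by Groebner_Basis.algebra
  moreover have "P dvd (2*K^2 + 2*K*g + 2*K + g^2) * (ga - be) - 2*(be + ga) + (4*a + 16*k^2 - 12*k*l + 44*k + 2*l^2 - 12*l + 32) * al"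
    using dal dbe dga by (intro dvd_add dvd_diff dvd_mult dvd_mult2) auto
  ultimately have "P dvd g^4" by simp
  then have "P dvd g" using Pp prime_dvd_power by blast
  then show ?thesis unfolding g_def P_def by (simp add: cong_iff_dvd_diff algebra_simps)
qed

theorem corollary4p3:
  fixes a :: int and \<rho> :: complex
  assumes "a \<ge> -1"
    and "poly (simplest_cubic_poly a) \<rho> = 0"
  shows "(\<forall>p::nat. prime p \<and> p > 3 \<and> int (p^2) dvd (a^2 + 3*a + 9) \<longrightarrow>
            (\<exists>k l :: int. 1 \<le> k \<and> k \<le> int p - 1 \<and> 1 \<le> l \<and> l \<le> int p - 1 \<and>
               (of_int k + of_int l * \<rho> + \<rho>^2) / of_nat p \<in> ring_of_integers \<rho> \<and>
               [2*k - l = -2] (mod int p)))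
       \<and> (\<forall>(p::nat) (k::int) (l::int). prime p \<and> p > 3 \<and>
            1 \<le> k \<and> k \<le> int p - 1 \<and> 1 \<le> l \<and> l \<le> int p - 1 \<and>
            is_integral_basis \<rho> 1 \<rho> ((of_int k + of_int l * \<rho> + \<rho>^2) / of_nat p) \<longrightarrow>
            [2*k - l = -2] (mod int p))"
  using part1[OF assms(2)] part2[OF assms(2)] by blast

end
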